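(* Let $b(\lambda)=\frac14\lambda^4+\frac12p\lambda^2+q\lambda$ with $p<0$, $q\in\mathbb{R}$. For $\eta\ne q$ let $\lambda(\eta)$ be the unique point at which $\lambda\mapsto\eta\lambda-b(\lambda)$ attains its global maximum, and let $\lambda(q)=\sqrt{-p}$ (so that $|\lambda(\eta)|\ge\sqrt{-p}$ for all $\eta$). Fix $x$ with $|x|>\sqrt{-p}$. Then for all $\eta\in\mathbb{R}$: (a) $x^2+x\lambda(\eta)+\lambda(\eta)^2+p\ge -2p$ if $|x|\ge2\sqrt{-p}$, and $\ge|x|(|x|-\sqrt{-p})$ if $\sqrt{-p}<|x|<2\sqrt{-p}$; (b) $x^2+2x\lambda(\eta)+3\lambda(\eta)^2+2p\ge-4p$ if $|x|\ge3\sqrt{-p}$, and $\ge(|x|-\sqrt{-p})^2$ if $\sqrt{-p}<|x|<3\sqrt{-p}$. In particular both expressions are bounded below by a positive constant independent of $\eta$. *)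

theory Defs
  imports Complex_Main
begin

definition bfun :: "real \<Rightarrow> real \<Rightarrow> real \<Rightarrow> real" where
  "bfun p q l = l^4 / 4 + p * l^2 / 2 + q * l"

definition lam :: "real \<Rightarrow> real \<Rightarrow> real \<Rightarrow> real" where
  "lam p q eta = (if eta = q then sqrt (-p)
     else (THE l. \<forall>m. eta * m - bfun p q m \<le> eta * l - bfun p q l))"

end

theory Submission
  imports Defs
begin

lemma key_ident:
  fixes p q eta l m :: real
  assumes "eta - q = l^3 + p*l"
  shows "(eta*l - bfun p q l) - (eta*m - bfun p q m)
         = (m-l)^2/4 * ((m - l + 2*l)^2 + 2*(l^2 + p))"
proof -
  have e: "eta = l^3 + p*l + q" using assms by simp
  show ?thesis unfolding bfun_def e by (simp add: field_simps power2_eq_square power3_eq_cube power4_eq_xxxx)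
qed

lemma maximiser:
  fixes p q eta l :: real
  assumes "eta - q = l^3 + p*l" "l^2 > -p"
  shows "lam p q eta = l \<or> eta = q"
proof (cases "eta = q")
  case False
  have ge: "eta*m - bfun p q m \<le> eta*l - bfun p q l" for m
  proof -
    have "0 \<le> (m-l)^2/4 * ((m - l + 2*l)^2 + 2*(l^2 + p))"
      using assms(2) by (intro mult_nonneg_nonneg) auto
    then show ?thesis using key_ident[OF assms(1), of m] by linarith
  qed
  have uniq: "m = l" if "\<forall>k. eta*k - bfun p q k \<le> eta*m - bfun p q m" for m
  proof (rule ccontr)
    assume "m \<noteq> l"
    then have "0 < (m-l)^2/4 * ((m - l + 2*l)^2 + 2*(l^2 + p))"
      using assms(2) by (intro mult_pos_pos) (auto intro: add_nonneg_pos)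
    then have "eta*m - bfun p q m < eta*l - bfun p q l"
      using key_ident[OF assms(1), of m] by linarith
    with that show False by (meson not_le)
  qed
  have "(THE l. \<forall>m. eta * m - bfun p q m \<le> eta * l - bfun p q l) = l"
    by (rule the_equality) (use ge uniq in auto)
  then show ?thesis using False unfolding lam_def by simp
qed simp

lemma root_pos:
  fixes p s :: real
  assumes "p < 0" "s > 0"
  shows "\<exists>l. l^3 + p*l = s \<and> l^2 > -p"
proof -
  define a where "a = sqrt (-p)"
  have a0: "a > 0" and a2: "a^2 = -p" using assms by (auto simp: a_def)
  define f where "f = (\<lambda>l::real. l^3 + p*l)"
  have fa: "f a = 0" using a2 unfolding f_def by (simp add: power3_eq_cube power2_eq_square algebra_simps)
  have "f (a+s+1) = (a+s+1)*((a+s+1)^2 - a^2)" using a2 unfolding f_def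
    by (simp add: power3_eq_cube power2_eq_square algebra_simps)
  also have "(a+s+1)^2 - a^2 = (s+1)*(2*a+s+1)" by (simp add: power2_eq_square algebra_simps)
  finally have "f (a+s+1) = (a+s+1)*((s+1)*(2*a+s+1))" .
  moreover have "(a+s+1)*((s+1)*(2*a+s+1)) \<ge> 1*((s+1)*1)"
    using a0 assms by (intro mult_mono) auto
  ultimately have fb: "f (a+s+1) \<ge> s" by simp
  obtain l where l: "l \<ge> a" "l \<le> a+s+1" "f l = s"
    using IVT[of f a s "a+s+1"] fa fb assms a0 unfolding f_def by (auto intro!: continuous_intros)
  then have "l \<noteq> a" using fa assms by auto
  with l have "l > a" by simp
  then have "l^2 > a^2" using a0 by (simp add: power_strict_mono)
  then show ?thesis using l a2 unfolding f_def by auto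
qed

lemma lam_bound:
  fixes p q eta :: real
  assumes "p < 0"
  shows "(lam p q eta)^2 \<ge> -p"
proof (cases "eta = q")
  case True
  then show ?thesis using assms by (simp add: lam_def)
next
  case False
  have "\<exists>l. l^3 + p*l = eta - q \<and> l^2 > -p"
  proof (cases "eta - q > 0")
    case True then show ?thesis using root_pos[OF assms] by blast
  next
    case F: False
    with False have "q - eta > 0" by simp
    then obtain l where "l^3 + p*l = q - eta" "l^2 > -p" using root_pos[OF assms] by blast
    then have "(-l)^3 + p*(-l) = eta - q" "(-l)^2 > -p" by (simp_all add: power3_eq_cube)
    then show ?thesis by blast
  qed
  then obtain l where "eta - q = l^3 + p*l" "l^2 > -p" by metis
  then show ?thesis using maximiser[of eta q l p] False by auto
qed

lemma boundsA:
  fixes a x L :: real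
  assumes "a > 0" "\<bar>x\<bar> > a" "L^2 \<ge> a^2"
  shows "(\<bar>x\<bar> \<ge> 2*a \<longrightarrow> x^2 + x*L + L^2 - a^2 \<ge> 2*a^2)
       \<and> (\<bar>x\<bar> < 2*a \<longrightarrow> x^2 + x*L + L^2 - a^2 \<ge> \<bar>x\<bar>*(\<bar>x\<bar> - a))
       \<and> (\<bar>x\<bar> \<ge> 3*a \<longrightarrow> x^2 + 2*x*L + 3*L^2 - 2*a^2 \<ge> 4*a^2)
       \<and> (\<bar>x\<bar> < 3*a \<longrightarrow> x^2 + 2*x*L + 3*L^2 - 2*a^2 \<ge> (\<bar>x\<bar> - a)^2)"
proof -
  define u where "u = \<bar>x\<bar>"
  define t where "t = \<bar>L\<bar>"
  have t: "t \<ge> a" using assms abs_le_square_iff[of a L] by (simp add: t_def)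
  have u: "u > a" using assms by (simp add: u_def)
  have xu: "x^2 = u^2" by (simp add: u_def)
  have Lt: "L^2 = t^2" by (simp add: t_def)
  have xL: "x*L \<ge> - (u*t)" unfolding u_def t_def abs_mult[symmetric] by simp
  have e1: "x^2 + x*L + L^2 - a^2 \<ge> u^2 - u*t + t^2 - a^2" using xL xu Lt by linarith
  have e2: "x^2 + 2*x*L + 3*L^2 - 2*a^2 \<ge> u^2 - 2*u*t + 3*t^2 - 2*a^2" using xL xu Lt by linarith
  have A1: "u^2 - u*t + t^2 - a^2 \<ge> 2*a^2" if h: "u \<ge> 2*a"
  proof -
    have x: "u^2 - u*t + t^2 - a^2 = (t - u/2)^2 + 3/4*u^2 - a^2" by (simp add: power2_eq_square algebra_simps)
    have "u^2 \<ge> (2*a)^2" by (rule power_mono) (use h assms(1) in auto)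
    then have "u^2 \<ge> 4*a^2" by simp
    with x show ?thesis using zero_le_power2[of "t - u/2"] by linarith
  qed
  have A2: "u^2 - u*t + t^2 - a^2 \<ge> u*(u - a)" if h: "u < 2*a"
  proof -
    have x: "u^2 - u*t + t^2 - a^2 - u*(u-a) = (t-a)*(t+a-u)" by (simp add: power2_eq_square algebra_simps)
    have "(t-a)*(t+a-u) \<ge> 0" using t h by (intro mult_nonneg_nonneg) auto
    with x show ?thesis by linarith
  qed
  have B1: "u^2 - 2*u*t + 3*t^2 - 2*a^2 \<ge> 4*a^2" if h: "u \<ge> 3*a"
  proof -
    have x: "u^2 - 2*u*t + 3*t^2 - 2*a^2 = 3*(t - u/3)^2 + 2/3*u^2 - 2*a^2" by (simp add: power2_eq_square algebra_simps)
    have "u^2 \<ge> (3*a)^2" by (rule power_mono) (use h assms(1) in auto)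
    then have "u^2 \<ge> 9*a^2" by simp
    with x show ?thesis using zero_le_power2[of "t - u/3"] by linarith
  qed
  have B2: "u^2 - 2*u*t + 3*t^2 - 2*a^2 \<ge> (u - a)^2" if h: "u < 3*a"
  proof -
    have x: "u^2 - 2*u*t + 3*t^2 - 2*a^2 - (u-a)^2 = (t-a)*(3*t+3*a-2*u)" by (simp add: power2_eq_square algebra_simps)
    have "(t-a)*(3*t+3*a-2*u) \<ge> 0" using t h by (intro mult_nonneg_nonneg) auto
    with x show ?thesis by linarith
  qed
  show ?thesis unfolding u_def[symmetric] using A1 A2 B1 B2 e1 e2 by linarith
qed

theorem proposition6p1:
  fixes p q x :: real
  assumes "p < 0" and "\<bar>x\<bar> > sqrt (-p)"
  shows "(\<forall>eta. (\<bar>x\<bar> \<ge> 2 * sqrt (-p) \<longrightarrow>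
              x^2 + x * lam p q eta + (lam p q eta)^2 + p \<ge> -2 * p)
          \<and> (\<bar>x\<bar> < 2 * sqrt (-p) \<longrightarrow>
              x^2 + x * lam p q eta + (lam p q eta)^2 + p \<ge> \<bar>x\<bar> * (\<bar>x\<bar> - sqrt (-p)))
          \<and> (\<bar>x\<bar> \<ge> 3 * sqrt (-p) \<longrightarrow>
              x^2 + 2 * x * lam p q eta + 3 * (lam p q eta)^2 + 2 * p \<ge> -4 * p)
          \<and> (\<bar>x\<bar> < 3 * sqrt (-p) \<longrightarrow>
              x^2 + 2 * x * lam p q eta + 3 * (lam p q eta)^2 + 2 * p \<ge> (\<bar>x\<bar> - sqrt (-p))^2))
        \<and> (\<exists>c > 0. \<forall>eta.
              x^2 + x * lam p q eta + (lam p q eta)^2 + p \<ge> c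
            \<and> x^2 + 2 * x * lam p q eta + 3 * (lam p q eta)^2 + 2 * p \<ge> c)"
proof -
  define a where "a = sqrt (-p)"
  have a0: "a > 0" and a2: "a^2 = -p" using assms by (auto simp: a_def)
  have xa: "\<bar>x\<bar> > a" using assms a_def by simp
  have B: "\<And>eta. (\<bar>x\<bar> \<ge> 2*a \<longrightarrow> x^2 + x*lam p q eta + (lam p q eta)^2 - a^2 \<ge> 2*a^2)
       \<and> (\<bar>x\<bar> < 2*a \<longrightarrow> x^2 + x*lam p q eta + (lam p q eta)^2 - a^2 \<ge> \<bar>x\<bar>*(\<bar>x\<bar> - a))
       \<and> (\<bar>x\<bar> \<ge> 3*a \<longrightarrow> x^2 + 2*x*lam p q eta + 3*(lam p q eta)^2 - 2*a^2 \<ge> 4*a^2)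
       \<and> (\<bar>x\<bar> < 3*a \<longrightarrow> x^2 + 2*x*lam p q eta + 3*(lam p q eta)^2 - 2*a^2 \<ge> (\<bar>x\<bar> - a)^2)"
    using boundsA[OF a0 xa] lam_bound[OF assms(1)] a2 by simp
  have part1: "\<forall>eta. (\<bar>x\<bar> \<ge> 2 * a \<longrightarrow>
              x^2 + x * lam p q eta + (lam p q eta)^2 + p \<ge> -2 * p)
          \<and> (\<bar>x\<bar> < 2 * a \<longrightarrow>
              x^2 + x * lam p q eta + (lam p q eta)^2 + p \<ge> \<bar>x\<bar> * (\<bar>x\<bar> - a))
          \<and> (\<bar>x\<bar> \<ge> 3 * a \<longrightarrow>
              x^2 + 2 * x * lam p q eta + 3 * (lam p q eta)^2 + 2 * p \<ge> -4 * p)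
          \<and> (\<bar>x\<bar> < 3 * a \<longrightarrow>
              x^2 + 2 * x * lam p q eta + 3 * (lam p q eta)^2 + 2 * p \<ge> (\<bar>x\<bar> - a)^2)"
    using B a2 by (simp add: algebra_simps)
  define c where "c = min (a^2) ((\<bar>x\<bar> - a)^2)"
  have c0: "c > 0" using a0 xa by (simp add: c_def)
  have c1: "c \<le> 2*a^2" "c \<le> 4*a^2" "c \<le> (\<bar>x\<bar> - a)^2" using a0 zero_le_power2[of a] unfolding c_def by linarith+
  have "(\<bar>x\<bar> - a)^2 \<le> \<bar>x\<bar>*(\<bar>x\<bar> - a)" using a0 xa by (simp add: power2_eq_square mult_right_mono)
  with c1 have c2: "c \<le> \<bar>x\<bar>*(\<bar>x\<bar> - a)" by linarith
  have part2: "\<forall>eta.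
              x^2 + x * lam p q eta + (lam p q eta)^2 + p \<ge> c
            \<and> x^2 + 2 * x * lam p q eta + 3 * (lam p q eta)^2 + 2 * p \<ge> c"
  proof
    fix eta
    show "x^2 + x * lam p q eta + (lam p q eta)^2 + p \<ge> c
            \<and> x^2 + 2 * x * lam p q eta + 3 * (lam p q eta)^2 + 2 * p \<ge> c"
      using part1[rule_format, of eta] c1 c2 a2 by (cases "\<bar>x\<bar> < 2*a"; cases "\<bar>x\<bar> < 3*a") auto
  qed
  show ?thesis using part1 part2 c0 unfolding a_def by blast
qed

end
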